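(* Fix $N\ge3$ and $\lambda>0$, and let $\underline F(1)$ be defined (as a function of $p\in[0,1)$) by the recursion in the context. Then, as $p\downarrow0$, $$\underline F(1)=F_0(1)-\lambda^{-1}(N-1)\,p+o(p),$$ where $F_0(1)=\sum_{i=1}^{N-1}\frac{1}{\lambda i(N-i)}=\frac{2}{\lambda N}H_{N-1}$ and $H_n=\sum_{k=1}^n 1/k$.
   Context: For $N\ge3$, $\lambda>0$, $p\in[0,1)$: set $\underline F(N)=0$ and, for $i=N-1,\dots,1$, $\underline F(i)=(1-p)^{i(N-i)}\big[\frac{1}{\lambda i(N-i)}+\underline F(i+1)\big]+\sum_{c=1}^{N-i-1}\binom{N-i}{c}[1-(1-p)^i]^c(1-p)^{i(N-i-c)}\underline F(i+c)$. This is the paper's lower bound on the expected flooding time of an $N$-node network with ON/OFF edges (stationary ON probability $p$, exponential OFF periods of mean $\lambda^{-1}$, instantaneous transmission over ON edges). *)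

theory Defs
  imports "HOL-Analysis.Analysis" "HOL-Library.Landau_Symbols"
begin

text \<open>Lower bound on the expected flooding time: Flow N lam p i is the paper's
underline F(i), with underline F(N) = 0 (we set it 0 for all i >= N).\<close>

function Flow :: "nat \<Rightarrow> real \<Rightarrow> real \<Rightarrow> nat \<Rightarrow> real" where
  "Flow N lam p i =
     (if N \<le> i then 0
      else (1 - p) ^ (i * (N - i)) * (1 / (lam * real i * real (N - i)) + Flow N lam p (i + 1))
         + (\<Sum>c\<in>{1..N - i - 1}. real ((N - i) choose c) * (1 - (1 - p) ^ i) ^ c
              * (1 - p) ^ (i * (N - i - c)) * Flow N lam p (i + c)))"
  by pat_completeness auto
termination
  by (relation "Wellfounded.measure (\<lambda>(N, lam, p, i). N - i)") auto

end

theory Submission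
  imports Defs
begin

declare Flow.simps[simp del]

lemma Flow_unfold:
  assumes "i < N"
  shows "Flow N lam p i = (1 - p) ^ (i * (N - i)) * (1 / (lam * real i * real (N - i)) + Flow N lam p (i + 1))
         + (\<Sum>c\<in>{1..N - i - 1}. real ((N - i) choose c) * (1 - (1 - p) ^ i) ^ c
              * (1 - p) ^ (i * (N - i - c)) * Flow N lam p (i + c))"
  using assms by (subst Flow.simps) simp

lemma term_deriv:
  fixes f :: "real \<Rightarrow> real"
  assumes "(f has_real_derivative d) (at 0)" and "c \<ge> 1" and "i \<ge> 1"
  shows "((\<lambda>p. K * (1 - (1-p)^i)^c * (1-p)^m * f p) has_real_derivative
           (if c = 1 then K * real i * f 0 else 0)) (at 0)"
proof -
  have "((\<lambda>p. K * (1 - (1-p)^i)^c * (1-p)^m * f p) has_real_derivative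
     K * (real c * (1 - (1-0)^i)^(c-1) * (- (real i * (1-0)^(i-1) * (-1)))) * (1-0)^m * f 0
     + K * (1 - (1-0)^i)^c * (real m * (1-0)^(m-1) * (-1)) * f 0
     + K * (1 - (1-0)^i)^c * (1-0)^m * d) (at 0)"
    by (auto intro!: derivative_eq_intros assms(1) simp: algebra_simps)
  moreover have "K * (real c * (1 - (1-0)^i)^(c-1) * (- (real i * (1-0)^(i-1) * (-1)))) * (1-0)^m * f 0
     + K * (1 - (1-0)^i)^c * (real m * (1-0)^(m-1) * (-1)) * f 0
     + K * (1 - (1-0)^i)^c * (1-0)^m * d = (if c = 1 then K * real i * f 0 else 0)"
    using assms(2) by (auto simp: power_0_left)
  ultimately show ?thesis by simp
qed

definition S :: "nat \<Rightarrow> real \<Rightarrow> nat \<Rightarrow> real" where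
  "S N lam i = (\<Sum>j=i..N-1. 1 / (lam * real j * real (N - j)))"

lemma S_step: "1 \<le> i \<Longrightarrow> i < N \<Longrightarrow> S N lam i = 1 / (lam * real i * real (N - i)) + S N lam (i+1)"
  unfolding S_def by (subst sum.atLeast_Suc_atMost) auto

lemma main_ind:
  assumes "1 \<le> i" "i \<le> N" and lam: "lam > 0"
  shows "((\<lambda>p. Flow N lam p i) has_real_derivative (- (real (N - i)) / lam)) (at 0)
         \<and> Flow N lam 0 i = S N lam i"
  using assms
proof (induction "N - i" arbitrary: i rule: less_induct)
  case less
  show ?case
  proof (cases "i = N")
    case True
    then show ?thesis by (simp add: S_def Flow.simps)
  next
    case False
    then have iN: "i < N" using less by simp
    have IH: "\<And>j. i < j \<Longrightarrow> j \<le> N \<Longrightarrow>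
       ((\<lambda>p. Flow N lam p j) has_real_derivative (- (real (N - j)) / lam)) (at 0)
         \<and> Flow N lam 0 j = S N lam j"
      using less by auto
    define a where "a = 1 / (lam * real i * real (N - i))"
    define n where "n = i * (N - i)"
    have eq: "(\<lambda>p. Flow N lam p i) = (\<lambda>p. (1 - p) ^ n * (a + Flow N lam p (i + 1))
         + (\<Sum>c\<in>{1..N - i - 1}. real ((N - i) choose c) * (1 - (1 - p) ^ i) ^ c
              * (1 - p) ^ (i * (N - i - c)) * Flow N lam p (i + c)))"
      using Flow_unfold[OF iN] unfolding a_def n_def by auto
    have d1: "((\<lambda>p. Flow N lam p (i+1)) has_real_derivative (- (real (N - (i+1))) / lam)) (at 0)"
      and v1: "Flow N lam 0 (i+1) = S N lam (i+1)" using IH[of "i+1"] iN by auto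
    have dsum: "((\<lambda>p. \<Sum>c\<in>{1..N - i - 1}. real ((N - i) choose c) * (1 - (1 - p) ^ i) ^ c
              * (1 - p) ^ (i * (N - i - c)) * Flow N lam p (i + c)) has_real_derivative
         (\<Sum>c\<in>{1..N - i - 1}. if c = 1 then real ((N - i) choose c) * real i * Flow N lam 0 (i + c) else 0)) (at 0)"
    proof (rule DERIV_sum)
      fix c assume c: "c \<in> {1..N - i - 1}"
      then have "i < i + c" "i + c \<le> N" by auto
      from conjunct1[OF IH[OF this]] c less(2) show "((\<lambda>p. real ((N - i) choose c) * (1 - (1 - p) ^ i) ^ c
              * (1 - p) ^ (i * (N - i - c)) * Flow N lam p (i + c)) has_real_derivative
         (if c = 1 then real ((N - i) choose c) * real i * Flow N lam 0 (i + c) else 0)) (at 0)"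
        by (intro term_deriv) auto
    qed
    have sumv: "(\<Sum>c\<in>{1..N - i - 1}. if c = 1 then real ((N - i) choose c) * real i * Flow N lam 0 (i + c) else 0)
       = real n * S N lam (i+1)"
    proof (cases "N - i - 1 \<ge> 1")
      case True
      then show ?thesis using v1 by (simp add: n_def)
    next
      case False
      then have "i + 1 = N" using iN by auto
      then show ?thesis by (simp add: S_def)
    qed
    have dall: "((\<lambda>p. Flow N lam p i) has_real_derivative
       (real n * (1-0)^(n-1) * (-1)) * (a + Flow N lam 0 (i+1)) + (1-0)^n * (- (real (N - (i+1))) / lam)
       + real n * S N lam (i+1)) (at 0)"
      unfolding eq sumv[symmetric]
      by (rule derivative_eq_intros d1 dsum refl | simp)+
    have an: "real n * a = 1 / lam"
      using iN less(2) lam unfolding a_def n_def by (auto simp: field_simps)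
    have "(real n * (1-0)^(n-1) * (-1)) * (a + Flow N lam 0 (i+1)) + (1-0)^n * (- (real (N - (i+1))) / lam)
       + real n * S N lam (i+1) = - (real (N - i)) / lam"
      using an v1 iN lam by (simp add: algebra_simps of_nat_diff field_simps)
    with dall have D: "((\<lambda>p. Flow N lam p i) has_real_derivative - (real (N - i)) / lam) (at 0)"
      by simp
    have "Flow N lam 0 i = S N lam i"
      using Flow_unfold[OF iN, of lam 0] v1 S_step[OF less(2) iN, of lam] by (simp add: power_0_left sum.neutral)
    with D show ?thesis by simp
  qed
qed

theorem lemma2:
  fixes N :: nat and lam :: real
  assumes "N \<ge> 3" and "lam > 0"
  shows "(\<Sum>i=1..N-1. 1 / (lam * real i * real (N - i))) = 2 / (lam * real N) * harm (N - 1)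
    \<and> (\<lambda>p. Flow N lam p 1 - ((\<Sum>i=1..N-1. 1 / (lam * real i * real (N - i)))
                               - (real N - 1) / lam * p)) \<in> o[at_right 0](\<lambda>p. p)"
proof
  have h1: "(\<Sum>i=1..N-1. 1 / (lam * real i * real (N - i)))
      = (\<Sum>i=1..N-1. (1/(lam*real N)) * (1/real i + 1/real (N-i)))"
    using assms by (intro sum.cong) (auto simp: field_simps of_nat_diff)
  have h2: "(\<Sum>i=1..N-1. 1/real (N-i)) = (\<Sum>i=1..N-1. 1/real i)"
    by (subst sum.atLeastAtMost_rev) (intro sum.cong, auto)
  have h3: "harm (N-1) = (\<Sum>i=1..N-1. 1/real i)"
    by (simp add: harm_def divide_inverse)
  show "(\<Sum>i=1..N-1. 1 / (lam * real i * real (N - i))) = 2 / (lam * real N) * harm (N - 1)"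
  proof -
    have "(\<Sum>i=1..N-1. (1/(lam*real N)) * (1/real i + 1/real (N-i)))
        = (1/(lam*real N)) * ((\<Sum>i=1..N-1. 1/real i) + (\<Sum>i=1..N-1. 1/real (N-i)))"
      by (simp only: sum_distrib_left[symmetric] sum.distrib)
    then show ?thesis unfolding h1 h3 h2 by simp
  qed
next
  define f where "f = (\<lambda>p. Flow N lam p 1)"
  define D where "D = - (real N - 1) / lam"
  have m: "(f has_real_derivative D) (at 0)" "f 0 = S N lam 1"
    using main_ind[of 1 N lam] assms unfolding f_def D_def by (auto simp: of_nat_diff)
  have mv: "f 0 = (\<Sum>i=1..N-1. 1 / (lam * real i * real (N - i)))" using m(2) by (simp add: S_def)
  have lim: "((\<lambda>h. (f (0 + h) - f 0) / h) \<longlongrightarrow> D) (at 0)"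
    using m(1) by (simp add: DERIV_def)
  have lim2: "((\<lambda>h. (f h - f 0) / h - D) \<longlongrightarrow> 0) (at_right 0)"
    using tendsto_mono[OF at_le[of "{0<..}" UNIV] tendsto_diff[OF lim tendsto_const[of D]]] by simp
  show "(\<lambda>p. Flow N lam p 1 - ((\<Sum>i=1..N-1. 1 / (lam * real i * real (N - i)))
                               - (real N - 1) / lam * p)) \<in> o[at_right 0](\<lambda>p. p)"
  proof (rule smalloI_tendsto)
    show "\<forall>\<^sub>F x in at_right 0. (x::real) \<noteq> 0"
      using eventually_at_right_less[of "0::real"] by eventually_elim simp
    have "\<forall>\<^sub>F x in at_right 0. (f x - f 0) / x - D = (Flow N lam x 1 - ((\<Sum>i=1..N-1. 1 / (lam * real i * real (N - i)))
                               - (real N - 1) / lam * x)) / x"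
      using eventually_at_right_less[of "0::real"]
      by eventually_elim (simp only: mv, simp add: f_def D_def field_simps, simp add: add_divide_distrib[symmetric])
    from tendsto_cong[OF this] lim2
    show "((\<lambda>x. (Flow N lam x 1 - ((\<Sum>i=1..N-1. 1 / (lam * real i * real (N - i)))
                               - (real N - 1) / lam * x)) / x) \<longlongrightarrow> 0) (at_right 0)" by simp
  qed
qed

end
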